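(* Let $G$ be a finite connected graph and $F$ a valid matching rule for $G$. Then there exists a prefix matching of $\Gamma$ generated by $F$.
   Context: $G$ is a finite simple connected graph with shortest-path distance $d$; $\ell(x_0,\dots,x_k)=\sum_{i=0}^{k-1}d(x_i,x_{i+1})$. A sequence is an element of $I_{k,l}(G)=\{(x_0,\dots,x_k)\in V(G)^{k+1}:x_i\ne x_{i+1}\ \forall i,\ \ell(x_0,\dots,x_k)=l\}$ for some $k,l\ge0$. Let $\Gamma$ be the directed graph whose vertices are all sequences, with an edge $a\to b$ whenever $a=(x_0,\dots,x_k)$ and $b=(x_0,\dots,\hat x_i,\dots,x_k)$ for some $1\le i\le k-1$ with $\ell(b)=\ell(a)$. A matching is a set of pairwise vertex-disjoint edges of $\Gamma$. Given a matching, the matching state of a sequence $(x_0,\dots,x_k)$ is: "unmatched" if it lies on no matching edge; "insert$(i,v)$" if it is matched to $(x_0,\dots,x_i,v,x_{i+1},\dots,x_k)$; "delete$(i)$" if it is matched to $(x_0,\dots,\hat x_i,\dots,x_k)$. A prefix matching is a matching such that whenever $(x_0,\dots,x_k)$ has state insert$(i,v)$ (resp. delete$(i)$), every sequence of the form $(x_0,\dots,x_{i+1},y_{i+2},\dots,y_{k'})$ has the same state insert$(i,v)$ (resp. delete$(i)$). A matching rule is a function $F$ from sequences to the set of symbols $\{\epsilon\}\cup\{\iota(v):v\in V(G)\}\cup\{\delta\}$. A prefix matching $M$ is generated by $F$ if for every sequence $(x_0,\dots,x_k)$, $k\ge1$, whose prefix $(x_0,\dots,x_{k-1})$ is unmatched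 in $M$, the state of $(x_0,\dots,x_k)$ is insert$(k-1,v)$ iff $F(x_0,\dots,x_k)=\iota(v)$, and is delete$(k-1)$ iff $F(x_0,\dots,x_k)=\delta$. $F$ is valid if: (1) whenever $F(x_0,\dots,x_k)=\iota(v)$, then $v\notin\{x_{k-1},x_k\}$, $d(x_{k-1},v)+d(v,x_k)=d(x_{k-1},x_k)$, $F(x_0,\dots,x_{k-1},v)=\epsilon$ and $F(x_0,\dots,x_{k-1},v,x_k)=\delta$; (2) whenever $F(x_0,\dots,x_k)=\delta$, then $d(x_{k-2},x_{k-1})+d(x_{k-1},x_k)=d(x_{k-2},x_k)$ and $F(x_0,\dots,x_{k-2},x_k)=\iota(x_{k-1})$. *)

theory Defs
  imports Main
begin

definition simple_graph :: "'a set \<Rightarrow> ('a \<Rightarrow> 'a \<Rightarrow> bool) \<Rightarrow> bool" where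
  "simple_graph V E \<longleftrightarrow>
     (\<forall>x y. E x y \<longrightarrow> x \<in> V \<and> y \<in> V) \<and>
     (\<forall>x y. E x y \<longrightarrow> E y x) \<and>
     (\<forall>x. \<not> E x x)"

definition walk :: "'a set \<Rightarrow> ('a \<Rightarrow> 'a \<Rightarrow> bool) \<Rightarrow> 'a list \<Rightarrow> bool" where
  "walk V E p \<longleftrightarrow> p \<noteq> [] \<and> set p \<subseteq> V \<and>
     (\<forall>i. Suc i < length p \<longrightarrow> E (p ! i) (p ! Suc i))"

definition connected_graph :: "'a set \<Rightarrow> ('a \<Rightarrow> 'a \<Rightarrow> bool) \<Rightarrow> bool" where
  "connected_graph V E \<longleftrightarrow>
     (\<forall>x\<in>V. \<forall>y\<in>V. \<exists>p. walk V E p \<and> hd p = x \<and> last p = y)"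

definition gdist :: "'a set \<Rightarrow> ('a \<Rightarrow> 'a \<Rightarrow> bool) \<Rightarrow> 'a \<Rightarrow> 'a \<Rightarrow> nat" where
  "gdist V E x y = (LEAST n. \<exists>p. walk V E p \<and> hd p = x \<and> last p = y \<and> length p = Suc n)"

definition is_seq :: "'a set \<Rightarrow> 'a list \<Rightarrow> bool" where
  "is_seq V xs \<longleftrightarrow> xs \<noteq> [] \<and> set xs \<subseteq> V \<and>
     (\<forall>i. Suc i < length xs \<longrightarrow> xs ! i \<noteq> xs ! Suc i)"

definition seq_len :: "'a set \<Rightarrow> ('a \<Rightarrow> 'a \<Rightarrow> bool) \<Rightarrow> 'a list \<Rightarrow> nat" where
  "seq_len V E xs = (\<Sum>i < length xs - 1. gdist V E (xs ! i) (xs ! Suc i))"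

definition remove_nth :: "nat \<Rightarrow> 'a list \<Rightarrow> 'a list" where
  "remove_nth i xs = take i xs @ drop (Suc i) xs"

definition insert_after :: "nat \<Rightarrow> 'a \<Rightarrow> 'a list \<Rightarrow> 'a list" where
  "insert_after i v xs = take (Suc i) xs @ v # drop (Suc i) xs"

definition gamma_edge :: "'a set \<Rightarrow> ('a \<Rightarrow> 'a \<Rightarrow> bool) \<Rightarrow> 'a list \<Rightarrow> 'a list \<Rightarrow> bool" where
  "gamma_edge V E a b \<longleftrightarrow> is_seq V a \<and> is_seq V b \<and>
     (\<exists>i. 1 \<le> i \<and> i + 2 \<le> length a \<and> b = remove_nth i a) \<and>
     seq_len V E b = seq_len V E a"

definition is_matching :: "'a set \<Rightarrow> ('a \<Rightarrow> 'a \<Rightarrow> bool) \<Rightarrow> ('a list \<times> 'a list) set \<Rightarrow> bool" where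
  "is_matching V E M \<longleftrightarrow>
     (\<forall>(a, b)\<in>M. gamma_edge V E a b) \<and>
     (\<forall>e1\<in>M. \<forall>e2\<in>M. e1 \<noteq> e2 \<longrightarrow>
        {fst e1, snd e1} \<inter> {fst e2, snd e2} = {})"

definition unmatched :: "('a list \<times> 'a list) set \<Rightarrow> 'a list \<Rightarrow> bool" where
  "unmatched M xs \<longleftrightarrow> (\<forall>ys. (xs, ys) \<notin> M \<and> (ys, xs) \<notin> M)"

definition state_ins :: "('a list \<times> 'a list) set \<Rightarrow> 'a list \<Rightarrow> nat \<Rightarrow> 'a \<Rightarrow> bool" where
  "state_ins M xs i v \<longleftrightarrow> Suc i < length xs \<and> (insert_after i v xs, xs) \<in> M"

definition state_del :: "('a list \<times> 'a list) set \<Rightarrow> 'a list \<Rightarrow> nat \<Rightarrow> bool" where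
  "state_del M xs i \<longleftrightarrow> Suc i < length xs \<and> (xs, remove_nth i xs) \<in> M"

definition prefix_matching :: "'a set \<Rightarrow> ('a \<Rightarrow> 'a \<Rightarrow> bool) \<Rightarrow> ('a list \<times> 'a list) set \<Rightarrow> bool" where
  "prefix_matching V E M \<longleftrightarrow> is_matching V E M \<and>
     (\<forall>xs i v. is_seq V xs \<and> state_ins M xs i v \<longrightarrow>
        (\<forall>ys. is_seq V ys \<and> i + 2 \<le> length ys \<and> take (i + 2) ys = take (i + 2) xs
              \<longrightarrow> state_ins M ys i v)) \<and>
     (\<forall>xs i. is_seq V xs \<and> state_del M xs i \<longrightarrow>
        (\<forall>ys. is_seq V ys \<and> i + 2 \<le> length ys \<and> take (i + 2) ys = take (i + 2) xs
              \<longrightarrow> state_del M ys i))"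

datatype 'a symbol = Eps | Iota 'a | Delta

text \<open>A matching rule assigns to each sequence a symbol epsilon, iota(v) with v \<in> V(G), or delta.
  It is modelled as a function on all lists; only its values on sequences matter.\<close>
definition matching_rule :: "'a set \<Rightarrow> ('a list \<Rightarrow> 'a symbol) \<Rightarrow> bool" where
  "matching_rule V F \<longleftrightarrow> (\<forall>xs v. is_seq V xs \<and> F xs = Iota v \<longrightarrow> v \<in> V)"

definition generated_by :: "'a set \<Rightarrow> ('a \<Rightarrow> 'a \<Rightarrow> bool) \<Rightarrow> ('a list \<times> 'a list) set
    \<Rightarrow> ('a list \<Rightarrow> 'a symbol) \<Rightarrow> bool" where
  "generated_by V E M F \<longleftrightarrow> prefix_matching V E M \<and>
     (\<forall>xs. is_seq V xs \<and> 2 \<le> length xs \<and> unmatched M (butlast xs) \<longrightarrow>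
        (\<forall>v. state_ins M xs (length xs - 2) v \<longleftrightarrow> F xs = Iota v) \<and>
        (state_del M xs (length xs - 2) \<longleftrightarrow> F xs = Delta))"

text \<open>Validity. For xs = (x_0,...,x_k): x_{k-1} = xs ! (length xs - 2),
  x_{k-2} = xs ! (length xs - 3), x_k = last xs.\<close>
definition valid_rule :: "'a set \<Rightarrow> ('a \<Rightarrow> 'a \<Rightarrow> bool) \<Rightarrow> ('a list \<Rightarrow> 'a symbol) \<Rightarrow> bool" where
  "valid_rule V E F \<longleftrightarrow>
     (\<forall>xs v. is_seq V xs \<and> F xs = Iota v \<longrightarrow>
        2 \<le> length xs \<and>
        v \<noteq> xs ! (length xs - 2) \<and> v \<noteq> last xs \<and>
        gdist V E (xs ! (length xs - 2)) v + gdist V E v (last xs)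
          = gdist V E (xs ! (length xs - 2)) (last xs) \<and>
        F (butlast xs @ [v]) = Eps \<and>
        F (butlast xs @ [v, last xs]) = Delta) \<and>
     (\<forall>xs. is_seq V xs \<and> F xs = Delta \<longrightarrow>
        3 \<le> length xs \<and>
        gdist V E (xs ! (length xs - 3)) (xs ! (length xs - 2))
          + gdist V E (xs ! (length xs - 2)) (last xs)
          = gdist V E (xs ! (length xs - 3)) (last xs) \<and>
        F (butlast (butlast xs) @ [last xs]) = Iota (xs ! (length xs - 2)))"

end

theory Submission
  imports Defs
begin


lemma len_remove_nth[simp]: "i < length xs \<Longrightarrow> length (remove_nth i xs) = length xs - 1"
  by (simp add: remove_nth_def)

lemma nth_remove_nth: "i < length xs \<Longrightarrow> k < length xs - 1 \<Longrightarrow>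
  remove_nth i xs ! k = (if k < i then xs ! k else xs ! Suc k)"
  by (auto simp: remove_nth_def nth_append min_def)

lemma len_insert_after[simp]: "i < length xs \<Longrightarrow> length (insert_after i v xs) = Suc (length xs)"
  by (simp add: insert_after_def)

lemma nth_insert_after: "i < length xs \<Longrightarrow> k < Suc (length xs) \<Longrightarrow>
  insert_after i v xs ! k = (if k \<le> i then xs ! k else if k = Suc i then v else xs ! (k - 1))"
proof -
  assume a: "i < length xs" "k < Suc (length xs)"
  have e: "insert_after i v xs = take (Suc i) xs @ v # drop (Suc i) xs" by (simp add: insert_after_def)
  show ?thesis
  proof (cases "k \<le> i")
    case True then show ?thesis using a by (simp add: e nth_append)
  next
    case False
    then have "insert_after i v xs ! k = (v # drop (Suc i) xs) ! (k - Suc i)" using a by (simp add: e nth_append)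
    moreover have "(v # drop (Suc i) xs) ! (k - Suc i) = (if k = Suc i then v else xs ! (k - 1))"
    proof (cases "k - Suc i")
      case 0 then show ?thesis using False by simp
    next
      case (Suc m)
      then have "k - 1 = Suc (i + m)" "k \<noteq> Suc i" by arith+
      then show ?thesis using Suc a by simp
    qed
    ultimately show ?thesis using False by simp
  qed
qed

lemma take_remove_nth: "q \<le> i \<Longrightarrow> take q (remove_nth i xs) = take q xs"
  by (simp add: remove_nth_def; linarith)

lemma take_remove_nth2: "Suc i < length xs \<Longrightarrow> take (Suc i) (remove_nth i xs) = take i xs @ [xs ! Suc i]"
  by (simp add: remove_nth_def take_Suc_conv_app_nth)

lemma take_insert_after: "q \<le> Suc i \<Longrightarrow> Suc i \<le> length xs \<Longrightarrow> take q (insert_after i v xs) = take q xs"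
  by (simp add: insert_after_def)

lemma take_insert_after2: "Suc i < length xs \<Longrightarrow> take (Suc (Suc i)) (insert_after i v xs) = take (Suc i) xs @ [v]"
  by (simp add: insert_after_def)

lemma take_insert_after3: "Suc i < length xs \<Longrightarrow>
   take (Suc (Suc (Suc i))) (insert_after i v xs) = take (Suc i) xs @ [v, xs ! Suc i]"
  by (simp add: insert_after_def take_Suc_conv_app_nth Cons_nth_drop_Suc[symmetric])

lemma remove_insert: "i < length xs \<Longrightarrow> remove_nth (Suc i) (insert_after i v xs) = xs"
  by (simp add: insert_after_def remove_nth_def)

lemma insert_remove: "1 \<le> i \<Longrightarrow> i < length c \<Longrightarrow> insert_after (i - 1) (c ! i) (remove_nth i c) = c"
  by (simp add: insert_after_def remove_nth_def Cons_nth_drop_Suc)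

lemma is_seq_take: "is_seq V xs \<Longrightarrow> 1 \<le> p \<Longrightarrow> is_seq V (take p xs)"
  unfolding is_seq_def by (auto dest: in_set_takeD)

lemma remove_nth_inj:
  assumes "is_seq V c" "i < length c" "j < length c" "remove_nth i c = remove_nth j c"
  shows "i = j"
proof (rule ccontr)
  assume ne: "i \<noteq> j"
  { fix i j assume ij: "i < j" "j < length c" "remove_nth i c = remove_nth j c"
    have "remove_nth i c ! i = c ! Suc i" using ij(1,2) by (simp add: nth_remove_nth)
    moreover have "remove_nth j c ! i = c ! i" using ij by (simp add: nth_remove_nth)
    ultimately have eq: "c ! i = c ! Suc i" using ij(3) by metis
    have "Suc i < length c" using ij by simp
    then have False using eq assms(1) unfolding is_seq_def by auto }
  then show False using ne assms by (metis linorder_neqE_nat)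
qed

lemma is_seq_remove:
  assumes "is_seq V xs" "1 \<le> i" "Suc i < length xs" "xs ! (i - 1) \<noteq> xs ! Suc i"
  shows "is_seq V (remove_nth i xs)"
proof -
  have "set (remove_nth i xs) \<subseteq> set xs" unfolding remove_nth_def
    using set_take_subset set_drop_subset by fastforce
  moreover have "remove_nth i xs \<noteq> []" using assms by (auto simp: remove_nth_def)
  moreover have "\<forall>k. Suc k < length (remove_nth i xs) \<longrightarrow> remove_nth i xs ! k \<noteq> remove_nth i xs ! Suc k"
  proof (intro allI impI)
    fix k assume k: "Suc k < length (remove_nth i xs)"
    have L: "length (remove_nth i xs) = length xs - 1" using assms by simp
    have A: "\<forall>j. Suc j < length xs \<longrightarrow> xs ! j \<noteq> xs ! Suc j" using assms(1) unfolding is_seq_def by auto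
    have n1: "remove_nth i xs ! k = (if k < i then xs ! k else xs ! Suc k)"
      using nth_remove_nth[of i xs k] k L assms by simp
    have n2: "remove_nth i xs ! Suc k = (if Suc k < i then xs ! Suc k else xs ! Suc (Suc k))"
      using nth_remove_nth[of i xs "Suc k"] k L assms by simp
    consider "Suc k < i" | "Suc k = i" | "i \<le> k" by linarith
    then show "remove_nth i xs ! k \<noteq> remove_nth i xs ! Suc k"
    proof cases
      case 1 then show ?thesis using n1 n2 A assms(3) by simp
    next
      case 2 then have "k = i - 1" by simp
      then show ?thesis using n1 n2 2 assms(4) by simp
    next
      case 3 then show ?thesis using n1 n2 A k L by simp
    qed
  qed
  ultimately show ?thesis using assms unfolding is_seq_def by auto
qed

lemma is_seq_insert:
  assumes "is_seq V xs" "Suc i < length xs" "v \<in> V" "v \<noteq> xs ! i" "v \<noteq> xs ! Suc i"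
  shows "is_seq V (insert_after i v xs)"
proof -
  have "set (insert_after i v xs) \<subseteq> insert v (set xs)" unfolding insert_after_def
    using set_take_subset set_drop_subset by fastforce
  moreover have "\<forall>k. Suc k < length (insert_after i v xs) \<longrightarrow> insert_after i v xs ! k \<noteq> insert_after i v xs ! Suc k"
  proof (intro allI impI)
    fix k assume k: "Suc k < length (insert_after i v xs)"
    then show "insert_after i v xs ! k \<noteq> insert_after i v xs ! Suc k"
    proof -
      have A: "\<forall>i. Suc i < length xs \<longrightarrow> xs ! i \<noteq> xs ! Suc i" using assms(1) unfolding is_seq_def by auto
      show ?thesis
      proof (cases "Suc k \<le> i")
        case True then show ?thesis using A k assms by (simp add: nth_insert_after)
      next
        case False
        show ?thesis
        proof (cases "k = i \<or> k = Suc i")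
          case True then show ?thesis using k assms by (auto simp: nth_insert_after)
        next
          case F2: False
          then have "Suc (k - 1) = k" "Suc (k-1) < length xs" using False k assms by auto
          then show ?thesis using A[rule_format, of "k-1"] F2 False k assms by (auto simp: nth_insert_after)
        qed
      qed
    qed
  qed
  ultimately show ?thesis using assms unfolding is_seq_def by (auto simp: insert_after_def)
qed



fun slen :: "('a \<Rightarrow> 'a \<Rightarrow> nat) \<Rightarrow> 'a list \<Rightarrow> nat" where
  "slen d (x # y # zs) = d x y + slen d (y # zs)"
| "slen d _ = 0"

lemma slen_sum: "(\<Sum>i < length xs - 1. d (xs ! i) (xs ! Suc i)) = slen d xs"
proof (induction d xs rule: slen.induct)
  case (1 d x y zs)
  have "(\<Sum>i < length (x # y # zs) - 1. d ((x # y # zs) ! i) ((x # y # zs) ! Suc i))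
      = (\<Sum>i < Suc (length (y # zs) - 1). d ((x # y # zs) ! i) ((x # y # zs) ! Suc i))" by simp
  also have "\<dots> = d x y + (\<Sum>i < length (y # zs) - 1. d ((y # zs) ! i) ((y # zs) ! Suc i))"
    by (subst sum.lessThan_Suc_shift) simp
  finally show ?case using 1 by simp
qed auto

lemma seq_len_slen: "seq_len V E xs = slen (gdist V E) xs"
  unfolding seq_len_def by (rule slen_sum)

lemma slen_append: "slen d (as @ b # cs) = (if as = [] then 0 else slen d as + d (last as) b) + slen d (b # cs)"
proof (induction as)
  case (Cons a as)
  then show ?case by (cases as) auto
qed simp

lemma slen_insert:
  assumes "Suc i < length xs"
  shows "slen d (insert_after i v xs) + d (xs ! i) (xs ! Suc i) = slen d xs + d (xs ! i) v + d v (xs ! Suc i)"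
proof -
  let ?a = "take (Suc i) xs" and ?r = "drop (Suc (Suc i)) xs"
  have dr: "drop (Suc i) xs = xs ! Suc i # ?r" using assms by (simp add: Cons_nth_drop_Suc)
  have ne: "?a \<noteq> []" "last ?a = xs ! i" using assms by (auto simp: take_Suc_conv_app_nth)
  have x: "xs = ?a @ xs ! Suc i # ?r" using dr by (metis append_take_drop_id)
  have ins: "insert_after i v xs = ?a @ v # xs ! Suc i # ?r" using dr by (simp add: insert_after_def)
  have h1: "slen d (?a @ xs ! Suc i # ?r) = slen d ?a + d (xs ! i) (xs ! Suc i) + slen d (xs ! Suc i # ?r)"
    using ne by (simp add: slen_append)
  have h2: "slen d (?a @ v # xs ! Suc i # ?r) = slen d ?a + d (xs ! i) v + d v (xs ! Suc i) + slen d (xs ! Suc i # ?r)"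
    using ne by (simp add: slen_append)
  show ?thesis using h1 h2 ins x by simp
qed

lemma gdist_self: "x \<in> V \<Longrightarrow> gdist V E x x = 0"
  unfolding gdist_def walk_def
  by (rule Least_eq_0) (rule exI[of _ "[x]"], simp)

lemma gdist_zero:
  assumes "connected_graph V E" "x \<in> V" "y \<in> V" "gdist V E x y = 0"
  shows "x = y"
proof -
  have ex: "\<exists>n p. walk V E p \<and> hd p = x \<and> last p = y \<and> length p = Suc n"
    using assms(1-3) unfolding connected_graph_def walk_def
    by (metis length_greater_0_conv Suc_pred)
  then obtain p where "walk V E p" "hd p = x" "last p = y" "length p = Suc 0"
    using LeastI_ex[OF ex] assms(4) unfolding gdist_def by auto
  then show ?thesis by (cases p) auto
qed



definition dec :: "('a list \<Rightarrow> 'a symbol) \<Rightarrow> 'a list \<Rightarrow> nat \<Rightarrow> bool" where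
  "dec F xs p \<longleftrightarrow> 2 \<le> p \<and> p \<le> length xs \<and> F (take p xs) \<noteq> Eps \<and>
     (\<forall>q. 2 \<le> q \<and> q < p \<longrightarrow> F (take q xs) = Eps)"

lemma dec_unique: "dec F xs p \<Longrightarrow> dec F xs q \<Longrightarrow> p = q"
  unfolding dec_def by (metis linorder_neqE_nat)

lemma dec_take: "dec F xs p \<Longrightarrow> p \<le> length ys \<Longrightarrow> take p ys = take p xs \<Longrightarrow> dec F ys p"
  unfolding dec_def
  by (metis min.absorb1 less_imp_le take_take)

locale ctx =
  fixes V :: "'a set" and E :: "'a \<Rightarrow> 'a \<Rightarrow> bool" and F :: "'a list \<Rightarrow> 'a symbol"
  assumes conn: "connected_graph V E" and mr: "matching_rule V F" and vr: "valid_rule V E F"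
begin

lemma vr_iota:
  assumes "is_seq V xs" "F xs = Iota v"
  shows "2 \<le> length xs \<and>
        v \<noteq> xs ! (length xs - 2) \<and> v \<noteq> last xs \<and>
        gdist V E (xs ! (length xs - 2)) v + gdist V E v (last xs)
          = gdist V E (xs ! (length xs - 2)) (last xs) \<and>
        F (butlast xs @ [v]) = Eps \<and>
        F (butlast xs @ [v, last xs]) = Delta"
proof -
  have "\<forall>xs v. is_seq V xs \<and> F xs = Iota v \<longrightarrow>
        2 \<le> length xs \<and>
        v \<noteq> xs ! (length xs - 2) \<and> v \<noteq> last xs \<and>
        gdist V E (xs ! (length xs - 2)) v + gdist V E v (last xs)
          = gdist V E (xs ! (length xs - 2)) (last xs) \<and>
        F (butlast xs @ [v]) = Eps \<and>
        F (butlast xs @ [v, last xs]) = Delta" using vr unfolding valid_rule_def by (rule conjunct1)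
  then show ?thesis using assms by blast
qed

lemma vr_delta:
  assumes "is_seq V xs" "F xs = Delta"
  shows "3 \<le> length xs \<and>
        gdist V E (xs ! (length xs - 3)) (xs ! (length xs - 2))
          + gdist V E (xs ! (length xs - 2)) (last xs)
          = gdist V E (xs ! (length xs - 3)) (last xs) \<and>
        F (butlast (butlast xs) @ [last xs]) = Iota (xs ! (length xs - 2))"
proof -
  have "\<forall>xs. is_seq V xs \<and> F xs = Delta \<longrightarrow>
        3 \<le> length xs \<and>
        gdist V E (xs ! (length xs - 3)) (xs ! (length xs - 2))
          + gdist V E (xs ! (length xs - 2)) (last xs)
          = gdist V E (xs ! (length xs - 3)) (last xs) \<and>
        F (butlast (butlast xs) @ [last xs]) = Iota (xs ! (length xs - 2))"
    using vr unfolding valid_rule_def by (rule conjunct2)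
  then show ?thesis using assms by blast
qed

lemma ins_lemma:
  assumes xs: "is_seq V xs" and d: "dec F xs p" and fv: "F (take p xs) = Iota v"
  shows "is_seq V (insert_after (p - 2) v xs) \<and> dec F (insert_after (p - 2) v xs) (Suc p)
    \<and> F (take (Suc p) (insert_after (p - 2) v xs)) = Delta
    \<and> remove_nth (p - 1) (insert_after (p - 2) v xs) = xs
    \<and> insert_after (p - 2) v xs ! (p - 1) = v"
proof -
  let ?t = "take p xs" and ?c = "insert_after (p - 2) v xs"
  have p: "2 \<le> p" "p \<le> length xs" using d by (auto simp: dec_def)
  have ts: "is_seq V ?t" using is_seq_take[OF xs] p by simp
  have lt: "length ?t = p" using p by simp
  have V: "v \<in> V" using mr ts fv unfolding matching_rule_def by blast
  have bl: "butlast ?t = take (p - 1) xs" using p by (simp add: butlast_take)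
  have la: "last ?t = xs ! (p - 1)" using p by (subst last_conv_nth) auto
  have n2: "?t ! (p - 2) = xs ! (p - 2)" using p by simp
  from vr_iota[OF ts fv] have val: "v \<noteq> ?t ! (length ?t - 2) \<and> v \<noteq> last ?t \<and>
        F (butlast ?t @ [v]) = Eps \<and> F (butlast ?t @ [v, last ?t]) = Delta"
    by blast
  have i: "Suc (p - 2) = p - 1" "Suc (p - 2) < length xs" using p by auto
  have cs: "is_seq V ?c" using is_seq_insert[OF xs i(2) V] val la n2 lt i(1) by simp
  have tc1: "\<And>q. q \<le> p - 1 \<Longrightarrow> take q ?c = take q xs"
    using take_insert_after[of _ "p-2" xs v] i by simp
  have tc2: "take p ?c = take (p - 1) xs @ [v]"
    using take_insert_after2[OF i(2), of v] i p by (simp add: numeral_2_eq_2)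
  have tc3: "take (Suc p) ?c = take (p - 1) xs @ [v, xs ! (p - 1)]"
    using take_insert_after3[OF i(2), of v] i p by (simp add: numeral_2_eq_2)
  have F2: "F (take p ?c) = Eps" using tc2 val bl by simp
  have F3: "F (take (Suc p) ?c) = Delta" using tc3 val bl la by simp
  have dc: "dec F ?c (Suc p)"
    unfolding dec_def
  proof (intro conjI allI impI)
    show "Suc p \<le> length ?c" using p i by simp
    fix q assume q: "2 \<le> q \<and> q < Suc p"
    show "F (take q ?c) = Eps"
    proof (cases "q = p")
      case True then show ?thesis using F2 by simp
    next
      case False then show ?thesis using q tc1[of q] d unfolding dec_def by auto
    qed
  qed (use p F3 in auto)
  have "remove_nth (p - 1) ?c = xs" using remove_insert[of "p-2" xs v] i by simp
  moreover have "?c ! (p - 1) = v" using nth_insert_after[of "p-2" xs "p-1" v] i by simp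
  ultimately show ?thesis using cs dc F3 by simp
qed

lemma del_lemma:
  assumes a: "is_seq V a" and d: "dec F a p" and fd: "F (take p a) = Delta"
  shows "3 \<le> p \<and> is_seq V (remove_nth (p - 2) a) \<and> dec F (remove_nth (p - 2) a) (p - 1)
    \<and> F (take (p - 1) (remove_nth (p - 2) a)) = Iota (a ! (p - 2))
    \<and> gamma_edge V E a (remove_nth (p - 2) a)
    \<and> insert_after (p - 3) (a ! (p - 2)) (remove_nth (p - 2) a) = a"
proof -
  let ?t = "take p a" and ?b = "remove_nth (p - 2) a"
  have p: "2 \<le> p" "p \<le> length a" using d by (auto simp: dec_def)
  have ts: "is_seq V ?t" using is_seq_take[OF a] p by simp
  have lt: "length ?t = p" using p by simp
  from vr_delta[OF ts fd] have val: "3 \<le> length ?t \<and>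
        gdist V E (?t ! (length ?t - 3)) (?t ! (length ?t - 2))
          + gdist V E (?t ! (length ?t - 2)) (last ?t)
          = gdist V E (?t ! (length ?t - 3)) (last ?t) \<and>
        F (butlast (butlast ?t) @ [last ?t]) = Iota (?t ! (length ?t - 2))" .
  have p3: "3 \<le> p" using val lt by simp
  have la: "last ?t = a ! (p - 1)" using p by (subst last_conv_nth) auto
  have n2: "?t ! (p - 2) = a ! (p - 2)" "?t ! (p - 3) = a ! (p - 3)" using p p3 by auto
  have bbl: "butlast (butlast ?t) = take (p - 2) a" using p by (simp add: butlast_take numeral_2_eq_2)
  let ?x = "a ! (p - 3)" and ?y = "a ! (p - 2)" and ?z = "a ! (p - 1)"
  have dist: "gdist V E ?x ?y + gdist V E ?y ?z = gdist V E ?x ?z" using val unfolding lt n2 la by blast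
  have inV: "?x \<in> V" "?y \<in> V" "?z \<in> V" using a p p3 unfolding is_seq_def by auto
  have xy: "?x \<noteq> ?y"
  proof -
    have "Suc (p - 3) < length a" "Suc (p - 3) = p - 2" using p p3 by auto
    then show ?thesis using a unfolding is_seq_def by metis
  qed
  have xz: "?x \<noteq> ?z"
  proof
    assume "?x = ?z"
    then have "gdist V E ?x ?y = 0" using dist gdist_self[OF inV(1)] by simp
    then show False using gdist_zero[OF conn inV(1,2)] xy by simp
  qed
  have e1: "p - 2 - 1 = p - 3" "Suc (p - 2) = p - 1" "Suc (p - 2) < length a" "1 \<le> p - 2" using p p3 by auto
  have bs: "is_seq V ?b" using is_seq_remove[OF a e1(4) e1(3)] xz e1 by simp
  have lb: "length ?b = length a - 1" using p by simp
  have tb1: "\<And>q. q \<le> p - 2 \<Longrightarrow> take q ?b = take q a" by (rule take_remove_nth)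
  have tb2: "take (p - 1) ?b = take (p - 2) a @ [?z]"
    using take_remove_nth2[OF e1(3)] e1 by simp
  have Fb: "F (take (p - 1) ?b) = Iota ?y" using val tb2 bbl la n2 lt by simp
  have db: "dec F ?b (p - 1)"
    unfolding dec_def
  proof (intro conjI allI impI)
    show "2 \<le> p - 1" using p3 by simp
    show "p - 1 \<le> length ?b" using p lb by simp
    show "F (take (p - 1) ?b) \<noteq> Eps" using Fb by simp
    fix q assume q: "2 \<le> q \<and> q < p - 1"
    then show "F (take q ?b) = Eps" using tb1[of q] d unfolding dec_def by auto
  qed
  have ins: "insert_after (p - 3) ?y ?b = a" using insert_remove[of "p-2" a] e1 by simp
  have i3: "Suc (p - 3) < length ?b" using p p3 lb by simp
  have b3: "?b ! (p - 3) = ?x" "?b ! Suc (p - 3) = ?z"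
  proof -
    have q: "Suc (Suc (p - 3)) = p - 1" "Suc (p - 3) = p - 2" using p3 by auto
    show "?b ! (p - 3) = ?x" using nth_remove_nth[of "p-2" a "p-3"] p p3 by auto
    show "?b ! Suc (p - 3) = ?z" using nth_remove_nth[of "p-2" a "Suc (p-3)"] p p3 q by auto
  qed
  have "slen (gdist V E) (insert_after (p - 3) ?y ?b) + gdist V E ?x ?z
      = slen (gdist V E) ?b + gdist V E ?x ?y + gdist V E ?y ?z"
    using slen_insert[OF i3, of "gdist V E" ?y] b3 by simp
  then have "seq_len V E a = seq_len V E ?b" using ins dist by (simp add: seq_len_slen)
  then have ge: "gamma_edge V E a ?b" unfolding gamma_edge_def
    using a bs p p3 by (intro conjI exI[of _ "p - 2"]) auto
  show ?thesis using p3 bs db Fb ge ins by simp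
qed

end


context ctx begin

definition Mset :: "('a list \<times> 'a list) set" where
  "Mset = {(a, remove_nth (p - 2) a) | a p. is_seq V a \<and> dec F a p \<and> F (take p a) = Delta}"

lemma memM: "(a, b) \<in> Mset \<longleftrightarrow> (\<exists>p. is_seq V a \<and> dec F a p \<and> F (take p a) = Delta \<and> b = remove_nth (p - 2) a)"
  unfolding Mset_def by blast

lemma ins_char:
  assumes xs: "is_seq V xs"
  shows "state_ins Mset xs i v \<longleftrightarrow> Suc i < length xs \<and> dec F xs (i + 2) \<and> F (take (i + 2) xs) = Iota v"
proof
  assume "state_ins Mset xs i v"
  then have i: "Suc i < length xs" and m: "(insert_after i v xs, xs) \<in> Mset" unfolding state_ins_def by auto
  let ?c = "insert_after i v xs"
  obtain p where c: "is_seq V ?c" "dec F ?c p" "F (take p ?c) = Delta" "xs = remove_nth (p - 2) ?c"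
    using m unfolding memM by blast
  note dl = del_lemma[OF c(1-3)]
  have p: "p \<le> length ?c" using c(2) by (simp add: dec_def)
  have "remove_nth (Suc i) ?c = xs" using remove_insert[of i xs v] i by simp
  then have "Suc i = p - 2" using remove_nth_inj[OF c(1), of "Suc i" "p - 2"] c(4) i p dl by simp
  moreover have "?c ! Suc i = v" using nth_insert_after[of i xs "Suc i" v] i by simp
  ultimately have pe: "i + 2 = p - 1" "?c ! (p - 2) = v" using dl by auto
  show "Suc i < length xs \<and> dec F xs (i + 2) \<and> F (take (i + 2) xs) = Iota v"
    unfolding pe using dl c(4) i pe(2) by metis
next
  assume a: "Suc i < length xs \<and> dec F xs (i + 2) \<and> F (take (i + 2) xs) = Iota v"
  let ?c = "insert_after i v xs"
  note il = ins_lemma[OF xs, of "i+2" v]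
  then have "is_seq V ?c" "dec F ?c (Suc (i + 2))" "F (take (Suc (i + 2)) ?c) = Delta" "remove_nth (i + 1) ?c = xs"
    using a by auto
  then have "(?c, remove_nth (Suc (i + 2) - 2) ?c) \<in> Mset" unfolding Mset_def by blast
  then show "state_ins Mset xs i v" unfolding state_ins_def using a \<open>remove_nth (i + 1) ?c = xs\<close> by simp
qed

lemma del_char:
  assumes xs: "is_seq V xs"
  shows "state_del Mset xs i \<longleftrightarrow> Suc i < length xs \<and> dec F xs (i + 2) \<and> F (take (i + 2) xs) = Delta"
proof
  assume "state_del Mset xs i"
  then have i: "Suc i < length xs" and m: "(xs, remove_nth i xs) \<in> Mset" unfolding state_del_def by auto
  obtain p where c: "dec F xs p" "F (take p xs) = Delta" "remove_nth i xs = remove_nth (p - 2) xs"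
    using m unfolding memM by blast
  note dl = del_lemma[OF xs c(1,2)]
  have p: "p \<le> length xs" using c(1) by (simp add: dec_def)
  have "i = p - 2" using remove_nth_inj[OF xs, of i "p - 2"] c(3) i p dl by simp
  then have "i + 2 = p" using dl by arith
  then show "Suc i < length xs \<and> dec F xs (i + 2) \<and> F (take (i + 2) xs) = Delta"
    using dl c i by simp
next
  assume a: "Suc i < length xs \<and> dec F xs (i + 2) \<and> F (take (i + 2) xs) = Delta"
  then have "(xs, remove_nth (i + 2 - 2) xs) \<in> Mset" unfolding Mset_def using xs by blast
  then show "state_del Mset xs i" unfolding state_del_def using a by simp
qed

lemma dec_matched:
  assumes xs: "is_seq V xs" and d: "dec F xs p"
  shows "\<not> unmatched Mset xs"
proof (cases "F (take p xs)")
  case Eps then show ?thesis using d by (simp add: dec_def)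
next
  case (Iota v)
  note il = ins_lemma[OF xs d Iota]
  then have "(insert_after (p - 2) v xs, remove_nth (Suc p - 2) (insert_after (p - 2) v xs)) \<in> Mset"
    unfolding Mset_def by blast
  moreover have "Suc p - 2 = p - 1" using d by (simp add: dec_def)
  ultimately have "(insert_after (p - 2) v xs, xs) \<in> Mset" using il by simp
  then show ?thesis unfolding unmatched_def by blast
next
  case Delta
  then have "(xs, remove_nth (p - 2) xs) \<in> Mset" unfolding Mset_def using xs d by blast
  then show ?thesis unfolding unmatched_def by blast
qed

lemma M_info:
  assumes "(a, b) \<in> Mset"
  obtains p where "3 \<le> p" "is_seq V a" "is_seq V b" "dec F a p" "F (take p a) = Delta" "dec F b (p - 1)"
    "F (take (p - 1) b) = Iota (a ! (p - 2))" "insert_after (p - 3) (a ! (p - 2)) b = a"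
    "b = remove_nth (p - 2) a" "gamma_edge V E a b"
proof -
  obtain p where c: "is_seq V a" "dec F a p" "F (take p a) = Delta" "b = remove_nth (p - 2) a"
    using assms memM by blast
  show ?thesis using that[of p] del_lemma[OF c(1-3)] c by simp
qed

lemma M_disj:
  assumes e1: "(a1, b1) \<in> Mset" and e2: "(a2, b2) \<in> Mset" and x: "x \<in> {a1, b1}" "x \<in> {a2, b2}"
  shows "a1 = a2 \<and> b1 = b2"
proof -
  obtain p1 where p1: "3 \<le> p1" "is_seq V a1" "is_seq V b1" "dec F a1 p1" "F (take p1 a1) = Delta" "dec F b1 (p1 - 1)"
    "F (take (p1 - 1) b1) = Iota (a1 ! (p1 - 2))" "insert_after (p1 - 3) (a1 ! (p1 - 2)) b1 = a1"
    "b1 = remove_nth (p1 - 2) a1" by (rule M_info[OF e1])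
  obtain p2 where p2: "3 \<le> p2" "is_seq V a2" "is_seq V b2" "dec F a2 p2" "F (take p2 a2) = Delta" "dec F b2 (p2 - 1)"
    "F (take (p2 - 1) b2) = Iota (a2 ! (p2 - 2))" "insert_after (p2 - 3) (a2 ! (p2 - 2)) b2 = a2"
    "b2 = remove_nth (p2 - 2) a2" by (rule M_info[OF e2])
  consider "x = a1" "x = a2" | "x = a1" "x = b2" | "x = b1" "x = a2" | "x = b1" "x = b2" using x by blast
  then show ?thesis
  proof cases
    case 1
    then have "p1 = p2" using dec_unique p1(4) p2(4) by blast
    then show ?thesis using 1 p1(9) p2(9) by simp
  next
    case 2
    then have "p1 = p2 - 1" using dec_unique p1(4) p2(6) by blast
    then show ?thesis using 2 p1(5) p2(7) by simp
  next
    case 3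
    then have "p1 - 1 = p2" using dec_unique p1(6) p2(4) by blast
    then show ?thesis using 3 p1(7) p2(5) by simp
  next
    case 4
    then have "p1 - 1 = p2 - 1" using dec_unique p1(6) p2(6) by blast
    then have pe: "p1 = p2" using p1(1) p2(1) by simp
    then have "a1 ! (p1 - 2) = a2 ! (p2 - 2)" using 4 p1(7) p2(7) by simp
    then have "a1 = a2" using p1(8) p2(8) pe 4 by metis
    then show ?thesis using 4 by simp
  qed
qed

lemma M_edge: "(a, b) \<in> Mset \<Longrightarrow> gamma_edge V E a b"
proof -
  assume "(a, b) \<in> Mset"
  then obtain p where c: "is_seq V a" "dec F a p" "F (take p a) = Delta" "b = remove_nth (p - 2) a"
    unfolding memM by blast
  show ?thesis using del_lemma[OF c(1-3)] c(4) by simp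
qed

lemma M_matching: "is_matching V E Mset"
  unfolding is_matching_def
proof (intro conjI ballI impI)
  fix e assume "e \<in> Mset"
  then show "case e of (a, b) \<Rightarrow> gamma_edge V E a b"
    by (cases e) (simp add: M_edge)
next
  fix e1 e2 assume e: "e1 \<in> Mset" "e2 \<in> Mset" "e1 \<noteq> e2"
  show "{fst e1, snd e1} \<inter> {fst e2, snd e2} = {}"
  proof (rule ccontr)
    assume "{fst e1, snd e1} \<inter> {fst e2, snd e2} \<noteq> {}"
    then obtain x where "x \<in> {fst e1, snd e1}" "x \<in> {fst e2, snd e2}" by blast
    then have "fst e1 = fst e2 \<and> snd e1 = snd e2"
      using M_disj[of "fst e1" "snd e1" "fst e2" "snd e2" x] e by simp
    then show False using e(3) by (simp add: prod_eq_iff)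
  qed
qed

lemma M_prefix: "prefix_matching V E Mset"
  unfolding prefix_matching_def
proof (intro conjI allI impI)
  show "is_matching V E Mset" by (rule M_matching)
next
  fix xs i v ys
  assume a: "is_seq V xs \<and> state_ins Mset xs i v"
    and b: "is_seq V ys \<and> i + 2 \<le> length ys \<and> take (i + 2) ys = take (i + 2) xs"
  then have "Suc i < length xs \<and> dec F xs (i + 2) \<and> F (take (i + 2) xs) = Iota v" using ins_char[of xs i v] a by simp
  then show "state_ins Mset ys i v" using ins_char[of ys i v] b dec_take[of F xs "i+2" ys] by auto
next
  fix xs i ys
  assume a: "is_seq V xs \<and> state_del Mset xs i"
    and b: "is_seq V ys \<and> i + 2 \<le> length ys \<and> take (i + 2) ys = take (i + 2) xs"
  then have "Suc i < length xs \<and> dec F xs (i + 2) \<and> F (take (i + 2) xs) = Delta" using del_char[of xs i] a by simp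
  then show "state_del Mset ys i" using del_char[of ys i] b dec_take[of F xs "i+2" ys] by auto
qed

lemma M_generated: "generated_by V E Mset F"
proof -
  have main: "(\<forall>v. state_ins Mset xs (length xs - 2) v = (F xs = Iota v)) \<and>
      (state_del Mset xs (length xs - 2) = (F xs = Delta))"
    if a: "is_seq V xs" "2 \<le> length xs" "unmatched Mset (butlast xs)" for xs
  proof -
    have all: "F (take q xs) = Eps" if q: "2 \<le> q" "q < length xs" for q
    proof (rule ccontr)
      assume nq: "F (take q xs) \<noteq> Eps"
      let ?P = "\<lambda>q. (2 \<le> q \<and> q < length xs) \<and> F (take q xs) \<noteq> Eps"
      define p where "p = (LEAST q. ?P q)"
      have p: "?P p" unfolding p_def by (rule LeastI[of ?P q]) (use q nq in blast)
      have minp: "\<not> ?P r" if "r < p" for r using not_less_Least[of r ?P] that unfolding p_def by blast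
      have "1 \<le> length xs - 1" using a by arith
      then have bs: "is_seq V (butlast xs)" using is_seq_take[of V xs "length xs - 1"] a by (simp add: butlast_conv_take)
      have tk: "take r (butlast xs) = take r xs" if "r \<le> p" for r using p that by (simp add: take_butlast)
      have "dec F (butlast xs) p" unfolding dec_def
      proof (intro conjI allI impI)
        show "2 \<le> p" using p by simp
        show "p \<le> length (butlast xs)" using p by auto
        show "F (take p (butlast xs)) \<noteq> Eps" using p tk[of p] by simp
        fix r assume "2 \<le> r \<and> r < p"
        then show "F (take r (butlast xs)) = Eps" using minp[of r] tk[of r] p by auto
      qed
      then show False using dec_matched[OF bs] a(3) by blast
    qed
    have d: "dec F xs (length xs) \<longleftrightarrow> F xs \<noteq> Eps" unfolding dec_def using a all by auto
    have e: "length xs - 2 + 2 = length xs" "Suc (length xs - 2) < length xs" using a by auto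
    have i1: "state_ins Mset xs (length xs - 2) v = (F xs = Iota v)" for v
      using ins_char[OF a(1), of "length xs - 2" v] unfolding e(1) using e(2) d by auto
    have i2: "state_del Mset xs (length xs - 2) = (F xs = Delta)"
      using del_char[OF a(1), of "length xs - 2"] unfolding e(1) using e(2) d by auto
    show ?thesis using i1 i2 by blast
  qed
  show ?thesis unfolding generated_by_def using M_prefix main by blast
qed

end

theorem lemma3p2:
  fixes V :: "'a set" and E :: "'a \<Rightarrow> 'a \<Rightarrow> bool" and F :: "'a list \<Rightarrow> 'a symbol"
  assumes "finite V" and "simple_graph V E" and "connected_graph V E"
    and "matching_rule V F" and "valid_rule V E F"
  shows "\<exists>M. generated_by V E M F"
proof -
  interpret ctx V E F using assms by unfold_locales
  show ?thesis using M_generated by blast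
qed

end
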